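(* Let $\boldsymbol{x}\in\mathbb{R}^K$ have pairwise distinct entries, let $x_{\max}=\max_k x_k$ be attained at index $\max$, let $\epsilon\in\mathbb{R}$, and suppose the set $\mathcal{N}=\{n : \epsilon< x_n< x_{\max}\}$ is nonempty, with $N=|\mathcal{N}|$. For temperature $T>0$ define $$\mathcal{M}_T(\boldsymbol{x}) = 1-\frac{1}{N}\sum_{n\in\mathcal{N}}\big(\phi_T(\boldsymbol{x})_{\max}-\phi_T(\boldsymbol{x})_n\big).$$ Then the map $T\mapsto \mathcal{M}_T(\boldsymbol{x})$ is strictly increasing on $(0,\infty)$.
   Context: For $T>0$, the SoftMax with temperature $T$ is $\phi_T:\mathbb{R}^K\to\Delta^{K-1}$, $\phi_T(\boldsymbol{x})_i = \dfrac{e^{x_i/T}}{\sum_{k=1}^K e^{x_k/T}}$, where $\Delta^{K-1}=\{\boldsymbol{p}\in\mathbb{R}^K_{\ge 0}: \sum_k p_k=1\}$. The quantity $\mathcal{M}_T$ is the paper's "multi-modality metric" applied to $\phi_T$. *)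

theory Defs
  imports "HOL-Analysis.Analysis"
begin

definition softmax :: "real \<Rightarrow> real^'k \<Rightarrow> real^'k" where
  "softmax T x = (\<chi> i. exp (x$i / T) / (\<Sum>j\<in>UNIV. exp (x$j / T)))"

definition mm_index_set :: "real \<Rightarrow> 'k \<Rightarrow> real^'k \<Rightarrow> 'k set" where
  "mm_index_set eps imax x = {n. eps < x$n \<and> x$n < x$imax}"

definition multimodality :: "real \<Rightarrow> real \<Rightarrow> 'k::finite \<Rightarrow> real^'k \<Rightarrow> real" where
  "multimodality T eps imax x =
     1 - (1 / real (card (mm_index_set eps imax x))) *
         (\<Sum>n\<in>mm_index_set eps imax x. softmax T x $ imax - softmax T x $ n)"

end

theory Submission
  imports Defs
begin

lemma sm_shift:
  fixes x :: "real^'k::finite"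
  assumes "T \<noteq> 0"
  shows "softmax T x $ i = exp ((x$i - c)/T) / (\<Sum>j\<in>UNIV. exp ((x$j - c)/T))"
proof -
  have e: "\<And>a. exp ((a - c)/T) = exp (a/T) / exp (c/T)"
    by (simp add: diff_divide_distrib exp_diff)
  show ?thesis
    unfolding softmax_def e by (simp add: sum_divide_distrib[symmetric])
qed

lemma key:
  fixes x :: "real^'k::finite"
  assumes "T > 0"
  shows "(\<Sum>n\<in>N. softmax T x $ imax - softmax T x $ n) =
     (\<Sum>n\<in>N. 1 - exp ((x$n - x$imax)/T)) / (\<Sum>j\<in>UNIV. exp ((x$j - x$imax)/T))"
  using assms by (simp add: sm_shift[where c="x$imax"] sum_divide_distrib diff_divide_distrib)

theorem mainTheorem3:
  fixes x :: "real^'k::finite" and eps :: real and imax :: 'k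
  assumes distinct: "inj (\<lambda>i. x$i)"
    and maxidx: "x$imax = (MAX k. x$k)"
    and nonempty: "mm_index_set eps imax x \<noteq> {}"
  shows "strict_mono_on {0<..} (\<lambda>T. multimodality T eps imax x)"
proof (rule strict_mono_onI)
  fix S T :: real
  assume S: "S \<in> {0<..}" and T: "T \<in> {0<..}" and ST: "S < T"
  hence S0: "S > 0" and T0: "T > 0" by auto
  define N where "N = mm_index_set eps imax x"
  have finN: "finite N" by simp
  have Nne: "N \<noteq> {}" using nonempty N_def by simp
  have le: "x$k \<le> x$imax" for k unfolding maxidx by (rule Max_ge) auto
  have Nlt: "x$n < x$imax" if "n \<in> N" for n using that unfolding N_def mm_index_set_def by auto
  define A where "A U = (\<Sum>n\<in>N. 1 - exp ((x$n - x$imax)/U))" for U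
  define Z where "Z U = (\<Sum>j\<in>UNIV. exp ((x$j - x$imax)/U))" for U :: real
  have stepn: "exp ((x$n - x$imax)/S) < exp ((x$n - x$imax)/T)" if "n \<in> N" for n
  proof -
    have "x$n - x$imax < 0" using Nlt[OF that] by simp
    hence "(x$n - x$imax)/S < (x$n - x$imax)/T"
      using S0 T0 ST by (simp add: divide_strict_left_mono_neg)
    thus ?thesis by simp
  qed
  have stepk: "exp ((x$k - x$imax)/S) \<le> exp ((x$k - x$imax)/T)" for k
  proof -
    have "x$k - x$imax \<le> 0" using le[of k] by simp
    hence "(x$k - x$imax)/S \<le> (x$k - x$imax)/T"
      using S0 T0 ST by (simp add: divide_left_mono_neg)
    thus ?thesis by simp
  qed
  have AT: "A T < A S" unfolding A_def
    by (rule sum_strict_mono[OF finN Nne]) (use stepn in auto)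
  have ATpos: "A T > 0" unfolding A_def
  proof (rule sum_pos[OF finN Nne])
    fix n assume "n \<in> N"
    have "x$n - x$imax < 0" using Nlt[OF \<open>n\<in>N\<close>] by simp
    hence "(x$n - x$imax)/T < 0" using T0 by (simp add: divide_neg_pos)
    thus "0 < 1 - exp ((x$n - x$imax)/T)" by simp
  qed
  have ZST: "Z S \<le> Z T" unfolding Z_def by (rule sum_mono) (use stepk in auto)
  have ZS: "Z S > 0" unfolding Z_def by (rule sum_pos) auto
  have "A T / Z T \<le> A T / Z S" using ATpos ZS ZST by (simp add: frac_le)
  also have "\<dots> < A S / Z S" using AT ZS by (simp add: divide_strict_right_mono)
  finally have lt: "A T / Z T < A S / Z S" .
  have cN: "card N > 0" using finN Nne by (simp add: card_gt_0_iff)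
  show "multimodality S eps imax x < multimodality T eps imax x"
    unfolding multimodality_def N_def[symmetric] key[OF S0] key[OF T0]
      A_def[symmetric] Z_def[symmetric]
  proof -
    have "(A T / Z T) / real (card N) < (A S / Z S) / real (card N)"
      using lt cN by (intro divide_strict_right_mono) auto
    moreover have "\<And>U. A U / (real (card N) * Z U) = (A U / Z U) / real (card N)"
      by simp
    ultimately show "1 - 1 / real (card N) * (A S / Z S) < 1 - 1 / real (card N) * (A T / Z T)" by (simp add: mult.commute)
  qed
qed

end
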